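(* Let $A$ be a $K$-algebra and $n\ge1$. (1) The algebra $\mathbb{S}_n\otimes_K A$ is prime iff $A$ is prime. (2) An ideal $\mathfrak p$ of $A$ is prime iff the ideal $\mathbb{S}_n\otimes\mathfrak p$ of $\mathbb{S}_n\otimes A$ is prime.
   Context: $K$ is a field. $\mathbb{S}_n$ is the $K$-algebra generated by $x_1,\dots,x_n,y_1,\dots,y_n$ subject to the defining relations $y_ix_i=1$ for all $i$, and $[x_i,y_j]=[x_i,x_j]=[y_i,y_j]=0$ for all $i\ne j$. *)

theory Defs
  imports Main
begin

definition ideal_in :: "'r set \<Rightarrow> ('r \<Rightarrow> 'r \<Rightarrow> 'r) \<Rightarrow> ('r \<Rightarrow> 'r) \<Rightarrow> 'r \<Rightarrow> ('r \<Rightarrow> 'r \<Rightarrow> 'r) \<Rightarrow> 'r set \<Rightarrow> bool" where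
  "ideal_in R add neg z mult I \<longleftrightarrow>
     I \<subseteq> R \<and> z \<in> I \<and> (\<forall>a\<in>I. \<forall>b\<in>I. add a b \<in> I) \<and> (\<forall>a\<in>I. neg a \<in> I) \<and>
     (\<forall>r\<in>R. \<forall>a\<in>I. mult r a \<in> I \<and> mult a r \<in> I)"

definition prime_ideal_in :: "'r set \<Rightarrow> ('r \<Rightarrow> 'r \<Rightarrow> 'r) \<Rightarrow> ('r \<Rightarrow> 'r) \<Rightarrow> 'r \<Rightarrow> ('r \<Rightarrow> 'r \<Rightarrow> 'r) \<Rightarrow> 'r set \<Rightarrow> bool" where
  "prime_ideal_in R add neg z mult P \<longleftrightarrow>
     ideal_in R add neg z mult P \<and> P \<noteq> R \<and>
     (\<forall>I J. ideal_in R add neg z mult I \<and> ideal_in R add neg z mult J \<and>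
            (\<forall>a\<in>I. \<forall>b\<in>J. mult a b \<in> P) \<longrightarrow> I \<subseteq> P \<or> J \<subseteq> P)"

definition prime_ring_in :: "'r set \<Rightarrow> ('r \<Rightarrow> 'r \<Rightarrow> 'r) \<Rightarrow> ('r \<Rightarrow> 'r) \<Rightarrow> 'r \<Rightarrow> ('r \<Rightarrow> 'r \<Rightarrow> 'r) \<Rightarrow> bool" where
  "prime_ring_in R add neg z mult \<longleftrightarrow> prime_ideal_in R add neg z mult {z}"

definition K_algebra :: "('k::field \<Rightarrow> 'a::ring_1 \<Rightarrow> 'a) \<Rightarrow> bool" where
  "K_algebra sc \<longleftrightarrow>
     (\<forall>a. sc 1 a = a) \<and> (\<forall>k l a. sc (k * l) a = sc k (sc l a)) \<and>
     (\<forall>k l a. sc (k + l) a = sc k a + sc l a) \<and> (\<forall>k a b. sc k (a + b) = sc k a + sc k b) \<and>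
     (\<forall>k a b. sc k (a * b) = sc k a * b \<and> sc k (a * b) = a * sc k b)"

text \<open>Monomials x^\<alpha> y^\<beta> of S_n, \<alpha>,\<beta> \<in> \<nat>^n, represented as pairs of functions
  nat \<Rightarrow> nat vanishing outside {0..<n}.  They form a K-basis of S_n = S_1^{\<otimes>n},
  and in S_1 one has x^a y^b x^c y^d = x^(a+c-b) y^d if b \<le> c, else x^a y^(b-c+d).\<close>
type_synonym monom = "(nat \<Rightarrow> nat) \<times> (nat \<Rightarrow> nat)"

definition valid_monom :: "nat \<Rightarrow> monom \<Rightarrow> bool" where
  "valid_monom n m \<longleftrightarrow> (\<forall>i\<ge>n. fst m i = 0 \<and> snd m i = 0)"

definition monom_mult :: "monom \<Rightarrow> monom \<Rightarrow> monom" where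
  "monom_mult u v =
     ((\<lambda>i. if snd u i \<le> fst v i then fst u i + fst v i - snd u i else fst u i),
      (\<lambda>i. if snd u i \<le> fst v i then snd v i else snd u i - fst v i + snd v i))"

text \<open>S_n \<otimes>_K A: finitely supported A-valued coefficient functions on the monomial basis.\<close>
definition Sn_tensor :: "nat \<Rightarrow> (monom \<Rightarrow> 'a::ring_1) set" where
  "Sn_tensor n = {f. finite {m. f m \<noteq> 0} \<and> (\<forall>m. f m \<noteq> 0 \<longrightarrow> valid_monom n m)}"

definition st_add :: "(monom \<Rightarrow> 'a::ring_1) \<Rightarrow> (monom \<Rightarrow> 'a) \<Rightarrow> monom \<Rightarrow> 'a" where
  "st_add f g = (\<lambda>m. f m + g m)"

definition st_neg :: "(monom \<Rightarrow> 'a::ring_1) \<Rightarrow> monom \<Rightarrow> 'a" where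
  "st_neg f = (\<lambda>m. - f m)"

definition st_zero :: "monom \<Rightarrow> 'a::ring_1" where
  "st_zero = (\<lambda>m. 0)"

text \<open>(\<Sum> a_u u)(\<Sum> b_v v) = \<Sum> (a_u b_v) (u v), since A commutes with S_n in S_n \<otimes> A.\<close>
definition st_mult :: "(monom \<Rightarrow> 'a::ring_1) \<Rightarrow> (monom \<Rightarrow> 'a) \<Rightarrow> monom \<Rightarrow> 'a" where
  "st_mult f g = (\<lambda>m. \<Sum>uv \<in> {u. f u \<noteq> 0} \<times> {v. g v \<noteq> 0}.
                        if monom_mult (fst uv) (snd uv) = m then f (fst uv) * g (snd uv) else 0)"

definition Sn_tensor_ideal :: "nat \<Rightarrow> 'a::ring_1 set \<Rightarrow> (monom \<Rightarrow> 'a) set" where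
  "Sn_tensor_ideal n p = {f \<in> Sn_tensor n. \<forall>m. f m \<in> p}"

end

theory Submission
  imports Defs
begin


definition z0 :: monom where "z0 = (\<lambda>_. 0, \<lambda>_. 0)"
definition mon :: "monom \<Rightarrow> 'a::ring_1 \<Rightarrow> monom \<Rightarrow> 'a" where
  "mon u c = (\<lambda>m. if m = u then c else 0)"

abbreviation idealA :: "'a::ring_1 set \<Rightarrow> bool" where "idealA p \<equiv> ideal_in UNIV (+) uminus 0 (*) p"

lemma idealA_sum:
  assumes "idealA p" "\<forall>x\<in>S. h x \<in> p"
  shows "sum h S \<in> p"
proof (cases "finite S")
  case True
  then show ?thesis using assms(2)
    by (induction S rule: finite_induct) (use assms(1) in \<open>auto simp: ideal_in_def\<close>)
next
  case False then show ?thesis using assms(1) by (simp add: ideal_in_def)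
qed

lemma idealA_sum_mod:
  assumes "idealA p" "finite S" "x0 \<in> S" "\<forall>x\<in>S-{x0}. h x \<in> p"
  shows "sum h S \<in> p \<longleftrightarrow> h x0 \<in> p"
proof -
  have s: "sum h S = h x0 + sum h (S - {x0})" using assms(2,3) by (simp add: sum.remove)
  have r: "sum h (S - {x0}) \<in> p" using idealA_sum[OF assms(1)] assms(4) by blast
  show ?thesis
  proof
    assume "sum h S \<in> p"
    then have "h x0 + sum h (S - {x0}) + - sum h (S - {x0}) \<in> p"
      using r assms(1) s unfolding ideal_in_def by metis
    then show "h x0 \<in> p" by simp
  next
    assume "h x0 \<in> p" then show "sum h S \<in> p" using s r assms(1) unfolding ideal_in_def by auto
  qed
qed

lemma st_mult_super:
  assumes "finite X" "finite Y" "{u. f u \<noteq> 0} \<subseteq> X" "{v. g v \<noteq> 0} \<subseteq> Y"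
  shows "st_mult f g m = (\<Sum>uv\<in>X \<times> Y. if monom_mult (fst uv) (snd uv) = m then f (fst uv) * g (snd uv) else (0::'a::ring_1))"
  unfolding st_mult_def
proof (rule sum.mono_neutral_left)
  show "finite (X \<times> Y)" using assms by simp
  show "{u. f u \<noteq> 0} \<times> {v. g v \<noteq> 0} \<subseteq> X \<times> Y" using assms by blast
  show "\<forall>i\<in>X \<times> Y - {u. f u \<noteq> 0} \<times> {v. g v \<noteq> 0}.
    (if monom_mult (fst i) (snd i) = m then f (fst i) * g (snd i) else 0) = 0" by auto
qed

lemma valid_mm: "valid_monom n u \<Longrightarrow> valid_monom n v \<Longrightarrow> valid_monom n (monom_mult u v)"
  by (auto simp: valid_monom_def monom_mult_def)

lemma st_mult_supp:
  "{m. st_mult f g m \<noteq> (0::'a::ring_1)} \<subseteq> (\<lambda>uv. monom_mult (fst uv) (snd uv)) ` ({u. f u \<noteq> 0} \<times> {v. g v \<noteq> 0})"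
proof (rule subsetI, rule ccontr)
  fix m assume a: "m \<in> {m. st_mult f g m \<noteq> 0}"
    and b: "m \<notin> (\<lambda>uv. monom_mult (fst uv) (snd uv)) ` ({u. f u \<noteq> 0} \<times> {v. g v \<noteq> 0})"
  have "st_mult f g m = 0" unfolding st_mult_def
    by (rule sum.neutral) (use b in force)
  then show False using a by simp
qed

lemma st_closed:
  assumes "f \<in> Sn_tensor n" "g \<in> Sn_tensor n"
  shows "st_mult f g \<in> (Sn_tensor n :: (monom \<Rightarrow> 'a::ring_1) set)"
proof -
  have ff: "finite {u. f u \<noteq> 0}" "finite {v. g v \<noteq> 0}" using assms by (auto simp: Sn_tensor_def)
  have "finite {m. st_mult f g m \<noteq> 0}"
    by (rule finite_subset[OF st_mult_supp]) (use ff in auto)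
  moreover have "valid_monom n m" if "st_mult f g m \<noteq> 0" for m
  proof -
    from that st_mult_supp[of f g] obtain u v where "f u \<noteq> 0" "g v \<noteq> 0" "m = monom_mult u v" by fastforce
    moreover have "valid_monom n u" "valid_monom n v" using assms \<open>f u \<noteq> 0\<close> \<open>g v \<noteq> 0\<close> unfolding Sn_tensor_def by blast+
    ultimately show ?thesis using valid_mm by blast
  qed
  ultimately show ?thesis by (auto simp: Sn_tensor_def)
qed

lemma Sn_valid: "f \<in> Sn_tensor n \<Longrightarrow> f m \<noteq> 0 \<Longrightarrow> valid_monom n m"
  unfolding Sn_tensor_def by blast

lemma Sn_fin: "f \<in> Sn_tensor n \<Longrightarrow> finite {m. f m \<noteq> 0}"
  unfolding Sn_tensor_def by blast

lemma zero_in: "st_zero \<in> Sn_tensor n"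
  by (simp add: Sn_tensor_def st_zero_def)

lemma ideal_lift:
  assumes "idealA I"
  shows "ideal_in (Sn_tensor n) st_add st_neg st_zero st_mult (Sn_tensor_ideal n I)"
proof -
  have I0: "0 \<in> I" and Iadd: "\<And>a b. a \<in> I \<Longrightarrow> b \<in> I \<Longrightarrow> a + b \<in> I" and Ineg: "\<And>a. a \<in> I \<Longrightarrow> - a \<in> I"
    and Il: "\<And>r a. a \<in> I \<Longrightarrow> r * a \<in> I" and Ir: "\<And>r a. a \<in> I \<Longrightarrow> a * r \<in> I"
    using assms by (auto simp: ideal_in_def)
  have add: "st_add f g \<in> Sn_tensor n" if "f \<in> Sn_tensor n" "g \<in> Sn_tensor n" for f g :: "monom \<Rightarrow> 'a"
  proof -
    have "{m. st_add f g m \<noteq> 0} \<subseteq> {m. f m \<noteq> 0} \<union> {m. g m \<noteq> 0}" by (auto simp: st_add_def)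
    then show ?thesis using that unfolding Sn_tensor_def
      by (auto simp: st_add_def intro: finite_subset)
  qed
  have neg: "st_neg f \<in> Sn_tensor n" if "f \<in> Sn_tensor n" for f :: "monom \<Rightarrow> 'a"
    using that unfolding Sn_tensor_def st_neg_def by auto
  have ml: "st_mult r a m \<in> I" if "\<forall>m. a m \<in> I" for r :: "monom \<Rightarrow> 'a" and a :: "monom \<Rightarrow> 'a" and m
    unfolding st_mult_def by (rule idealA_sum[OF assms]) (use that I0 Il in auto)
  have mr: "st_mult a r m \<in> I" if "\<forall>m. a m \<in> I" for r :: "monom \<Rightarrow> 'a" and a :: "monom \<Rightarrow> 'a" and m
    unfolding st_mult_def by (rule idealA_sum[OF assms]) (use that I0 Ir in auto)
  show ?thesis unfolding ideal_in_def
  proof (intro conjI ballI)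
    show "Sn_tensor_ideal n I \<subseteq> Sn_tensor n" by (auto simp: Sn_tensor_ideal_def)
    show "st_zero \<in> Sn_tensor_ideal n I" using zero_in I0 by (auto simp: Sn_tensor_ideal_def st_zero_def)
  next
    fix a b :: "monom \<Rightarrow> 'a" assume "a \<in> Sn_tensor_ideal n I" "b \<in> Sn_tensor_ideal n I"
    then have "st_add a b \<in> Sn_tensor n" "\<forall>m. st_add a b m \<in> I"
      using add Iadd by (auto simp: Sn_tensor_ideal_def) (auto simp: st_add_def)
    then show "st_add a b \<in> Sn_tensor_ideal n I" unfolding Sn_tensor_ideal_def by blast
  next
    fix a :: "monom \<Rightarrow> 'a" assume "a \<in> Sn_tensor_ideal n I"
    then have "st_neg a \<in> Sn_tensor n" "\<forall>m. st_neg a m \<in> I"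
      using neg Ineg by (auto simp: Sn_tensor_ideal_def) (auto simp: st_neg_def)
    then show "st_neg a \<in> Sn_tensor_ideal n I" unfolding Sn_tensor_ideal_def by blast
  next
    fix r a :: "monom \<Rightarrow> 'a" assume "r \<in> Sn_tensor n" "a \<in> Sn_tensor_ideal n I"
    then show "st_mult r a \<in> Sn_tensor_ideal n I"
      using ml st_closed by (auto simp: Sn_tensor_ideal_def)
  next
    fix r a :: "monom \<Rightarrow> 'a" assume "r \<in> Sn_tensor n" "a \<in> Sn_tensor_ideal n I"
    then show "st_mult a r \<in> Sn_tensor_ideal n I"
      using mr st_closed by (auto simp: Sn_tensor_ideal_def)
  qed
qed



lemma mon_in: "valid_monom n u \<Longrightarrow> mon u c \<in> Sn_tensor n"
  unfolding Sn_tensor_def mon_def by (auto intro: finite_subset[of _ "{u}"])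

lemma mult_mono_left:
  assumes "finite X" "{v. f v \<noteq> 0} \<subseteq> X"
  shows "st_mult (mon u 1) f m = (\<Sum>v\<in>X. if monom_mult u v = m then f v else (0::'a::ring_1))"
proof -
  have "st_mult (mon u 1) f m = (\<Sum>uv\<in>{u} \<times> X. if monom_mult (fst uv) (snd uv) = m then mon u 1 (fst uv) * f (snd uv) else 0)"
    by (rule st_mult_super) (use assms in \<open>auto simp: mon_def\<close>)
  also have "{u} \<times> X = Pair u ` X" by auto
  also have "(\<Sum>uv\<in>Pair u ` X. if monom_mult (fst uv) (snd uv) = m then mon u 1 (fst uv) * f (snd uv) else 0)
     = (\<Sum>v\<in>X. if monom_mult u v = m then f v else 0)"
    by (subst sum.reindex) (auto simp: inj_on_def intro!: sum.cong simp: mon_def)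
  finally show ?thesis .
qed

lemma mult_mono_right:
  assumes "finite X" "{v. f v \<noteq> 0} \<subseteq> X"
  shows "st_mult f (mon w c) m = (\<Sum>v\<in>X. if monom_mult v w = m then f v * c else (0::'a::ring_1))"
proof -
  have "st_mult f (mon w c) m = (\<Sum>uv\<in>X \<times> {w}. if monom_mult (fst uv) (snd uv) = m then f (fst uv) * mon w c (snd uv) else 0)"
    by (rule st_mult_super) (use assms in \<open>auto simp: mon_def\<close>)
  also have "X \<times> {w} = (\<lambda>v. (v, w)) ` X" by auto
  also have "(\<Sum>uv\<in>(\<lambda>v. (v, w)) ` X. if monom_mult (fst uv) (snd uv) = m then f (fst uv) * mon w c (snd uv) else 0)
     = (\<Sum>v\<in>X. if monom_mult v w = m then f v * c else 0)"
    by (subst sum.reindex) (auto simp: inj_on_def intro!: sum.cong simp: mon_def)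
  finally show ?thesis .
qed

lemma mult_mono_both:
  assumes "finite X" "{v. f v \<noteq> 0} \<subseteq> X"
  shows "st_mult (st_mult (mon u 1) f) (mon w 1) m
     = (\<Sum>v\<in>X. if monom_mult (monom_mult u v) w = m then f v else (0::'a::ring_1))"
proof -
  define G where "G = st_mult (mon u 1) f"
  define T where "T = monom_mult u ` X"
  have G: "G v' = (\<Sum>v\<in>X. if monom_mult u v = v' then f v else 0)" for v'
    unfolding G_def by (rule mult_mono_left[OF assms])
  have "{v'. G v' \<noteq> 0} \<subseteq> T"
  proof
    fix v' assume "v' \<in> {v'. G v' \<noteq> 0}"
    then have "(\<Sum>v\<in>X. if monom_mult u v = v' then f v else 0) \<noteq> 0" using G by simp
    then have "\<exists>v\<in>X. (if monom_mult u v = v' then f v else 0) \<noteq> 0"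
    proof (rule contrapos_np)
      assume "\<not> (\<exists>v\<in>X. (if monom_mult u v = v' then f v else 0) \<noteq> 0)"
      then show "(\<Sum>v\<in>X. if monom_mult u v = v' then f v else 0) = 0" by (intro sum.neutral) blast
    qed
    then obtain v where "v \<in> X" "monom_mult u v = v'" by (auto split: if_splits)
    then show "v' \<in> T" unfolding T_def by blast
  qed
  then have "st_mult G (mon w 1) m = (\<Sum>v'\<in>T. if monom_mult v' w = m then G v' * 1 else 0)"
    by (intro mult_mono_right) (use assms in \<open>auto simp: T_def\<close>)
  also have "\<dots> = (\<Sum>v'\<in>T. \<Sum>v\<in>X. if v' = monom_mult u v \<and> monom_mult v' w = m then f v else 0)"
    by (rule sum.cong) (auto simp: G intro!: sum.cong)
  also have "\<dots> = (\<Sum>v\<in>X. \<Sum>v'\<in>T. if v' = monom_mult u v then (if monom_mult v' w = m then f v else 0) else 0)"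
    by (subst sum.swap) (auto intro!: sum.cong)
  also have "\<dots> = (\<Sum>v\<in>X. if monom_mult (monom_mult u v) w = m then f v else 0)"
    by (rule sum.cong) (auto simp: T_def assms(1))
  finally show ?thesis unfolding G_def .
qed



definition nrm :: "nat \<Rightarrow> (nat \<Rightarrow> nat) \<Rightarrow> nat" where "nrm n a = (\<Sum>i<n. a i)"

lemma le_nrm_eq:
  assumes "\<forall>i. a i \<le> b i" "\<forall>i\<ge>n. a i = b i" "nrm n b \<le> nrm n a"
  shows "a = b"
proof (rule ccontr)
  assume "a \<noteq> b"
  then obtain j where j: "a j \<noteq> b j" by auto
  then have "j < n" using assms(2) by (meson not_le)
  moreover have "a j < b j" using j assms(1) le_neq_implies_less by blast
  ultimately have "nrm n a < nrm n b" unfolding nrm_def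
    by (intro sum_strict_mono_ex1) (use assms(1) in auto)
  then show False using assms(3) by simp
qed

lemma ex_min:
  assumes "finite Q" "Q \<noteq> {}"
  shows "\<exists>x\<in>Q. \<forall>y\<in>Q. (h x :: nat) \<le> h y"
proof -
  have "Min (h ` Q) \<in> h ` Q" using assms by simp
  then obtain x where x: "x \<in> Q" "h x = Min (h ` Q)" by auto
  show ?thesis
  proof (intro bexI[of _ x] ballI)
    fix y assume "y \<in> Q" then show "h x \<le> h y" using x assms Min_le[of "h ` Q" "h y"] by simp
  qed (use x in auto)
qed

lemma ex_max:
  assumes "finite Q" "Q \<noteq> {}"
  shows "\<exists>x\<in>Q. \<forall>y\<in>Q. h y \<le> (h x :: nat)"
proof -
  have "Max (h ` Q) \<in> h ` Q" using assms by simp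
  then obtain x where x: "x \<in> Q" "h x = Max (h ` Q)" by auto
  show ?thesis
  proof (intro bexI[of _ x] ballI)
    fix y assume "y \<in> Q" then show "h y \<le> h x" using x assms Max_ge[of "h ` Q" "h y"] by simp
  qed (use x in auto)
qed

lemma mm_fst_zero: "fst (monom_mult (monom_mult (\<lambda>_. 0, \<alpha>) (a, b)) (\<beta>, \<lambda>_. 0)) i = 0 \<Longrightarrow> a i \<le> \<alpha> i \<and> (a i = \<alpha> i \<longrightarrow> \<beta> i \<le> b i)"
  by (auto simp: monom_mult_def split: if_splits)

lemma mm_snd_zero: "snd (monom_mult (monom_mult (\<lambda>_. 0, \<gamma>) (a, b)) (\<delta>, \<lambda>_. 0)) i = 0 \<Longrightarrow> b i \<le> \<delta> i \<and> (b i = \<delta> i \<longrightarrow> \<gamma> i \<le> a i)"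
  by (auto simp: monom_mult_def split: if_splits)

lemma mm_self: "monom_mult (monom_mult (\<lambda>_. 0, \<alpha>) (\<alpha>, \<beta>)) (\<beta>, \<lambda>_. 0) = z0"
  by (auto simp: monom_mult_def z0_def fun_eq_iff)

lemma mm_z0:
  assumes "monom_mult u v = z0" shows "fst u = (\<lambda>_. 0) \<and> snd v = (\<lambda>_. 0)"
proof -
  have h: "fst (monom_mult u v) i = 0 \<and> snd (monom_mult u v) i = 0" for i using assms by (simp add: z0_def)
  have "fst u i = 0 \<and> snd v i = 0" for i
    using h[of i] by (simp add: monom_mult_def split: if_splits)
  then show ?thesis by auto
qed

lemma mm_right0: "monom_mult v z0 = v"
  by (cases v) (auto simp: monom_mult_def z0_def fun_eq_iff)



lemma reduce_left:
  fixes f :: "monom \<Rightarrow> 'a::ring_1"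
  assumes p: "idealA p" and f: "f \<in> Sn_tensor n" and fm: "f m1 \<notin> p"
  shows "\<exists>\<alpha> \<beta>. valid_monom n (\<lambda>_. 0, \<alpha>) \<and> valid_monom n (\<beta>, \<lambda>_. 0) \<and>
     st_mult (st_mult (mon (\<lambda>_. 0, \<alpha>) 1) f) (mon (\<beta>, \<lambda>_. 0) 1) z0 \<notin> p \<and>
     (\<forall>m. fst m = (\<lambda>_. 0) \<and> m \<noteq> z0 \<longrightarrow> st_mult (st_mult (mon (\<lambda>_. 0, \<alpha>) 1) f) (mon (\<beta>, \<lambda>_. 0) 1) m \<in> p)"
proof -
  have p0: "0 \<in> p" using p by (simp add: ideal_in_def)
  define S where "S = {m. f m \<noteq> 0}"
  have finS: "finite S" using f S_def Sn_fin by blast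
  define Q where "Q = {m. f m \<notin> p}"
  have QS: "Q \<subseteq> S" using p0 by (auto simp: Q_def S_def)
  have finQ: "finite Q" using finS QS finite_subset by blast
  have Qne: "Q \<noteq> {}" using fm unfolding Q_def by blast
  have Qv: "valid_monom n m" if "m \<in> Q" for m using QS that Sn_valid[OF f, of m] unfolding S_def by blast
  obtain m0 where m0: "m0 \<in> Q" "\<forall>m\<in>Q. nrm n (fst m0) \<le> nrm n (fst m)"
    using ex_min[OF finQ Qne, of "\<lambda>m. nrm n (fst m)"] by blast
  define \<alpha> where "\<alpha> = fst m0"
  define Q2 where "Q2 = {m\<in>Q. fst m = \<alpha>}"
  have finQ2: "finite Q2" using finQ Q2_def by auto
  have Q2ne: "Q2 \<noteq> {}" using m0 \<alpha>_def unfolding Q2_def by blast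
  obtain m1 where m1: "m1 \<in> Q2" "\<forall>m\<in>Q2. nrm n (snd m) \<le> nrm n (snd m1)"
    using ex_max[OF finQ2 Q2ne, of "\<lambda>m. nrm n (snd m)"] by blast
  define \<beta> where "\<beta> = snd m1"
  have m1eq: "m1 = (\<alpha>, \<beta>)" using m1(1) Q2_def \<beta>_def by (cases m1) auto
  have m1Q: "(\<alpha>,\<beta>) \<in> Q" using m1(1) m1eq Q2_def by auto
  define R where "R v = monom_mult (monom_mult (\<lambda>_. 0, \<alpha>) v) (\<beta>, \<lambda>_. 0)" for v
  have key: "v = (\<alpha>, \<beta>)" if "v \<in> Q" "fst (R v) = (\<lambda>_. 0)" for v
  proof -
    obtain a b where v: "v = (a, b)" by (cases v)
    have c: "a i \<le> \<alpha> i \<and> (a i = \<alpha> i \<longrightarrow> \<beta> i \<le> b i)" for i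
      using mm_fst_zero[of \<alpha> a b \<beta> i] that(2) unfolding R_def v by simp
    have va: "valid_monom n (a,b)" using Qv that(1) v by simp
    have vm: "valid_monom n (\<alpha>, \<beta>)" using Qv m1Q by simp
    have ae: "a = \<alpha>"
    proof (rule le_nrm_eq[of a \<alpha> n])
      show "\<forall>i. a i \<le> \<alpha> i" using c by blast
      show "\<forall>i\<ge>n. a i = \<alpha> i" using va vm by (simp add: valid_monom_def)
      show "nrm n \<alpha> \<le> nrm n a" using m0(2) that(1) v \<alpha>_def by force
    qed
    have "\<beta> = b"
    proof (rule le_nrm_eq[of \<beta> b n])
      show "\<forall>i. \<beta> i \<le> b i" using c ae by blast
      show "\<forall>i\<ge>n. \<beta> i = b i" using va vm by (simp add: valid_monom_def)
      show "nrm n b \<le> nrm n \<beta>" using m1(2) that(1) v ae \<beta>_def Q2_def by force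
    qed
    then show ?thesis using v ae by simp
  qed
  define F where "F = st_mult (st_mult (mon (\<lambda>_. 0, \<alpha>) 1) f) (mon (\<beta>, \<lambda>_. 0) 1)"
  have F: "F m = (\<Sum>v\<in>S. if R v = m then f v else 0)" for m
    unfolding F_def R_def by (rule mult_mono_both) (use finS S_def in auto)
  have RQ: "R (\<alpha>,\<beta>) = z0" unfolding R_def by (rule mm_self)
  have "F z0 \<notin> p"
  proof -
    have "(\<Sum>v\<in>S. if R v = z0 then f v else 0) \<in> p \<longleftrightarrow> (if R (\<alpha>,\<beta>) = z0 then f (\<alpha>,\<beta>) else 0) \<in> p"
    proof (rule idealA_sum_mod[OF p finS])
      show "(\<alpha>,\<beta>) \<in> S" using m1Q QS by auto
      show "\<forall>x\<in>S - {(\<alpha>,\<beta>)}. (if R x = z0 then f x else 0) \<in> p"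
      proof
        fix x assume x: "x \<in> S - {(\<alpha>,\<beta>)}"
        show "(if R x = z0 then f x else 0) \<in> p"
        proof (cases "R x = z0")
          case True
          then have "fst (R x) = (\<lambda>_. 0)" by (simp add: z0_def)
          then have "x \<notin> Q" using key x by blast
          then show ?thesis using True by (simp add: Q_def)
        qed (simp add: p0)
      qed
    qed
    then show ?thesis using F RQ m1Q Q_def by simp
  qed
  moreover have "F m \<in> p" if "fst m = (\<lambda>_. 0)" "m \<noteq> z0" for m
  proof -
    have "(\<Sum>v\<in>S. if R v = m then f v else 0) \<in> p"
    proof (rule idealA_sum[OF p], rule ballI)
      fix x assume "x \<in> S"
      show "(if R x = m then f x else 0) \<in> p"
      proof (cases "R x = m")
        case True
        then have "fst (R x) = (\<lambda>_. 0)" using that by simp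
        moreover have "x \<noteq> (\<alpha>,\<beta>)" using True RQ that(2) by auto
        ultimately have "x \<notin> Q" using key by blast
        then show ?thesis using True by (simp add: Q_def)
      qed (simp add: p0)
    qed
    then show ?thesis using F by simp
  qed
  moreover have "valid_monom n (\<lambda>_. 0, \<alpha>)" "valid_monom n (\<beta>, \<lambda>_. 0)"
    using Qv[OF m1Q] by (auto simp: valid_monom_def)
  ultimately show ?thesis unfolding F_def by blast
qed

lemma reduce_right:
  fixes f :: "monom \<Rightarrow> 'a::ring_1"
  assumes p: "idealA p" and f: "f \<in> Sn_tensor n" and fm: "f m1 \<notin> p"
  shows "\<exists>\<alpha> \<beta>. valid_monom n (\<lambda>_. 0, \<alpha>) \<and> valid_monom n (\<beta>, \<lambda>_. 0) \<and>
     st_mult (st_mult (mon (\<lambda>_. 0, \<alpha>) 1) f) (mon (\<beta>, \<lambda>_. 0) 1) z0 \<notin> p \<and>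
     (\<forall>m. snd m = (\<lambda>_. 0) \<and> m \<noteq> z0 \<longrightarrow> st_mult (st_mult (mon (\<lambda>_. 0, \<alpha>) 1) f) (mon (\<beta>, \<lambda>_. 0) 1) m \<in> p)"
proof -
  have p0: "0 \<in> p" using p by (simp add: ideal_in_def)
  define S where "S = {m. f m \<noteq> 0}"
  have finS: "finite S" using f S_def Sn_fin by blast
  define Q where "Q = {m. f m \<notin> p}"
  have QS: "Q \<subseteq> S" using p0 by (auto simp: Q_def S_def)
  have finQ: "finite Q" using finS QS finite_subset by blast
  have Qne: "Q \<noteq> {}" using fm unfolding Q_def by blast
  have Qv: "valid_monom n m" if "m \<in> Q" for m using QS that Sn_valid[OF f, of m] unfolding S_def by blast
  obtain m0 where m0: "m0 \<in> Q" "\<forall>m\<in>Q. nrm n (snd m0) \<le> nrm n (snd m)"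
    using ex_min[OF finQ Qne, of "\<lambda>m. nrm n (snd m)"] by blast
  define \<beta> where "\<beta> = snd m0"
  define Q2 where "Q2 = {m\<in>Q. snd m = \<beta>}"
  have finQ2: "finite Q2" using finQ Q2_def by auto
  have Q2ne: "Q2 \<noteq> {}" using m0 \<beta>_def unfolding Q2_def by blast
  obtain m1 where m1: "m1 \<in> Q2" "\<forall>m\<in>Q2. nrm n (fst m) \<le> nrm n (fst m1)"
    using ex_max[OF finQ2 Q2ne, of "\<lambda>m. nrm n (fst m)"] by blast
  define \<alpha> where "\<alpha> = fst m1"
  have m1eq: "m1 = (\<alpha>, \<beta>)" using m1(1) Q2_def \<alpha>_def by (cases m1) auto
  have m1Q: "(\<alpha>,\<beta>) \<in> Q" using m1(1) m1eq Q2_def by auto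
  define R where "R v = monom_mult (monom_mult (\<lambda>_. 0, \<alpha>) v) (\<beta>, \<lambda>_. 0)" for v
  have key: "v = (\<alpha>, \<beta>)" if "v \<in> Q" "snd (R v) = (\<lambda>_. 0)" for v
  proof -
    obtain a b where v: "v = (a, b)" by (cases v)
    have c: "b i \<le> \<beta> i \<and> (b i = \<beta> i \<longrightarrow> \<alpha> i \<le> a i)" for i
      using mm_snd_zero[of \<alpha> a b \<beta> i] that(2) unfolding R_def v by simp
    have va: "valid_monom n (a,b)" using Qv that(1) v by simp
    have vm: "valid_monom n (\<alpha>, \<beta>)" using Qv m1Q by simp
    have be: "b = \<beta>"
    proof (rule le_nrm_eq[of b \<beta> n])
      show "\<forall>i. b i \<le> \<beta> i" using c by blast
      show "\<forall>i\<ge>n. b i = \<beta> i" using va vm by (simp add: valid_monom_def)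
      show "nrm n \<beta> \<le> nrm n b" using m0(2) that(1) v \<beta>_def by force
    qed
    have "\<alpha> = a"
    proof (rule le_nrm_eq[of \<alpha> a n])
      show "\<forall>i. \<alpha> i \<le> a i" using c be by blast
      show "\<forall>i\<ge>n. \<alpha> i = a i" using va vm by (simp add: valid_monom_def)
      show "nrm n a \<le> nrm n \<alpha>" using m1(2) that(1) v be \<alpha>_def Q2_def by force
    qed
    then show ?thesis using v be by simp
  qed
  define F where "F = st_mult (st_mult (mon (\<lambda>_. 0, \<alpha>) 1) f) (mon (\<beta>, \<lambda>_. 0) 1)"
  have F: "F m = (\<Sum>v\<in>S. if R v = m then f v else 0)" for m
    unfolding F_def R_def by (rule mult_mono_both) (use finS S_def in auto)
  have RQ: "R (\<alpha>,\<beta>) = z0" unfolding R_def by (rule mm_self)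
  have "F z0 \<notin> p"
  proof -
    have "(\<Sum>v\<in>S. if R v = z0 then f v else 0) \<in> p \<longleftrightarrow> (if R (\<alpha>,\<beta>) = z0 then f (\<alpha>,\<beta>) else 0) \<in> p"
    proof (rule idealA_sum_mod[OF p finS])
      show "(\<alpha>,\<beta>) \<in> S" using m1Q QS by auto
      show "\<forall>x\<in>S - {(\<alpha>,\<beta>)}. (if R x = z0 then f x else 0) \<in> p"
      proof
        fix x assume x: "x \<in> S - {(\<alpha>,\<beta>)}"
        show "(if R x = z0 then f x else 0) \<in> p"
        proof (cases "R x = z0")
          case True
          then have "snd (R x) = (\<lambda>_. 0)" by (simp add: z0_def)
          then have "x \<notin> Q" using key x by blast
          then show ?thesis using True by (simp add: Q_def)
        qed (simp add: p0)
      qed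
    qed
    then show ?thesis using F RQ m1Q Q_def by simp
  qed
  moreover have "F m \<in> p" if "snd m = (\<lambda>_. 0)" "m \<noteq> z0" for m
  proof -
    have "(\<Sum>v\<in>S. if R v = m then f v else 0) \<in> p"
    proof (rule idealA_sum[OF p], rule ballI)
      fix x assume "x \<in> S"
      show "(if R x = m then f x else 0) \<in> p"
      proof (cases "R x = m")
        case True
        then have "snd (R x) = (\<lambda>_. 0)" using that by simp
        moreover have "x \<noteq> (\<alpha>,\<beta>)" using True RQ that(2) by auto
        ultimately have "x \<notin> Q" using key by blast
        then show ?thesis using True by (simp add: Q_def)
      qed (simp add: p0)
    qed
    then show ?thesis using F by simp
  qed
  moreover have "valid_monom n (\<lambda>_. 0, \<alpha>)" "valid_monom n (\<beta>, \<lambda>_. 0)"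
    using Qv[OF m1Q] by (auto simp: valid_monom_def)
  ultimately show ?thesis unfolding F_def by blast
qed



lemma prime_elem:
  fixes p :: "'a::ring_1 set"
  assumes P: "prime_ideal_in UNIV (+) uminus 0 (*) p" and a: "a \<notin> p" and b: "b \<notin> p"
  shows "\<exists>r. a * r * b \<notin> p"
proof (rule ccontr)
  assume "\<not> ?thesis" then have H: "\<forall>r. a * r * b \<in> p" by simp
  have ip: "idealA p" using P by (simp add: prime_ideal_in_def)
  have p0: "0 \<in> p" and padd: "\<And>x y. x \<in> p \<Longrightarrow> y \<in> p \<Longrightarrow> x + y \<in> p"
    and pneg: "\<And>x. x \<in> p \<Longrightarrow> - x \<in> p"
    and pl: "\<And>r x. x \<in> p \<Longrightarrow> r * x \<in> p" and pr: "\<And>r x. x \<in> p \<Longrightarrow> x * r \<in> p"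
    using ip by (auto simp: ideal_in_def)
  define I where "I = {x. \<forall>r. x * r * b \<in> p}"
  define J where "J = {y. \<forall>x\<in>I. \<forall>r. x * r * y \<in> p}"
  have iI: "idealA I" unfolding ideal_in_def
  proof (intro conjI ballI)
    show "I \<subseteq> UNIV" by simp
    show "0 \<in> I" using p0 by (simp add: I_def)
  next
    fix x y assume "x \<in> I" "y \<in> I"
    then show "x + y \<in> I" using padd by (simp add: I_def distrib_right)
  next
    fix x assume "x \<in> I"
    then show "- x \<in> I" using pneg by (simp add: I_def)
  next
    fix s x assume "x \<in> I"
    then show "s * x \<in> I" using pl by (simp add: I_def mult.assoc)
  next
    fix s x assume "x \<in> I"
    then show "x * s \<in> I" by (simp add: I_def) (metis mult.assoc)
  qed
  have iJ: "idealA J" unfolding ideal_in_def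
  proof (intro conjI ballI)
    show "J \<subseteq> UNIV" by simp
    show "0 \<in> J" using p0 by (simp add: J_def)
  next
    fix x y assume "x \<in> J" "y \<in> J"
    then show "x + y \<in> J" using padd by (simp add: J_def distrib_left)
  next
    fix x assume "x \<in> J"
    then show "- x \<in> J" using pneg by (simp add: J_def)
  next
    fix s y assume "y \<in> J"
    then show "s * y \<in> J" by (simp add: J_def) (metis mult.assoc)
  next
    fix s y assume "y \<in> J"
    then show "y * s \<in> J" using pr by (simp add: J_def) (metis mult.assoc)
  qed
  have prod: "\<forall>x\<in>I. \<forall>y\<in>J. x * y \<in> p"
    by (auto simp: J_def) (metis mult.right_neutral)
  have "I \<subseteq> p \<or> J \<subseteq> p" using P iI iJ prod unfolding prime_ideal_in_def by blast
  moreover have "a \<in> I" using H by (simp add: I_def)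
  moreover have "b \<in> J" by (simp add: J_def I_def)
  ultimately show False using a b by blast
qed

lemma z0_valid: "valid_monom n z0" by (simp add: valid_monom_def z0_def)

lemma mult_scalar:
  assumes "F \<in> Sn_tensor n"
  shows "st_mult F (mon z0 r) m = F m * (r::'a::ring_1)"
proof -
  have "st_mult F (mon z0 r) m = (\<Sum>v\<in>{v. F v \<noteq> 0}. if monom_mult v z0 = m then F v * r else 0)"
    by (rule mult_mono_right) (use Sn_fin[OF assms] in auto)
  also have "\<dots> = (\<Sum>v\<in>{v. F v \<noteq> 0}. if v = m then F v * r else 0)" by (simp add: mm_right0)
  also have "\<dots> = (if m \<in> {v. F v \<noteq> 0} then F m * r else 0)" using Sn_fin[OF assms] by (simp add: sum.delta)
  also have "\<dots> = F m * r" by auto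
  finally show ?thesis .
qed

lemma mon_z0_val: "mon z0 a z0 = a" by (simp add: mon_def)

lemma dir1:
  fixes p :: "'a::ring_1 set"
  assumes P: "prime_ideal_in UNIV (+) uminus 0 (*) p"
  shows "prime_ideal_in (Sn_tensor n) st_add st_neg st_zero st_mult (Sn_tensor_ideal n p)"
proof -
  have ip: "idealA p" using P by (simp add: prime_ideal_in_def)
  have p0: "0 \<in> p" and pl: "\<And>r x. x \<in> p \<Longrightarrow> r * x \<in> p" and pr: "\<And>r x. x \<in> p \<Longrightarrow> x * r \<in> p"
    using ip by (auto simp: ideal_in_def)
  obtain a where a: "a \<notin> p" using P by (auto simp: prime_ideal_in_def)
  define P' where "P' = Sn_tensor_ideal n p"
  have iP: "ideal_in (Sn_tensor n) st_add st_neg st_zero st_mult P'" unfolding P'_def by (rule ideal_lift[OF ip])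
  have ne: "P' \<noteq> Sn_tensor n"
  proof
    assume "P' = Sn_tensor n"
    then have "mon z0 a \<in> P'" using mon_in[OF z0_valid] by blast
    then have "mon z0 a z0 \<in> p" unfolding P'_def Sn_tensor_ideal_def by blast
    then show False using a mon_z0_val by metis
  qed
  have pr2: "I \<subseteq> P' \<or> J \<subseteq> P'"
    if iI: "ideal_in (Sn_tensor n) st_add st_neg st_zero st_mult I"
      and iJ: "ideal_in (Sn_tensor n) st_add st_neg st_zero st_mult J"
      and H: "\<forall>f\<in>I. \<forall>g\<in>J. st_mult f g \<in> P'" for I J :: "(monom \<Rightarrow> 'a) set"
  proof (rule ccontr)
    assume "\<not> (I \<subseteq> P' \<or> J \<subseteq> P')"
    then obtain f g where f: "f \<in> I" "f \<notin> P'" and g: "g \<in> J" "g \<notin> P'" by blast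
    have IB: "I \<subseteq> Sn_tensor n" and JB: "J \<subseteq> Sn_tensor n" using iI iJ by (auto simp: ideal_in_def)
    have Icl: "\<And>r x. r \<in> Sn_tensor n \<Longrightarrow> x \<in> I \<Longrightarrow> st_mult r x \<in> I \<and> st_mult x r \<in> I"
      using iI by (simp add: ideal_in_def)
    have Jcl: "\<And>r x. r \<in> Sn_tensor n \<Longrightarrow> x \<in> J \<Longrightarrow> st_mult r x \<in> J \<and> st_mult x r \<in> J"
      using iJ by (simp add: ideal_in_def)
    have fB: "f \<in> Sn_tensor n" and gB: "g \<in> Sn_tensor n" using f g IB JB by auto
    obtain m1 where m1: "f m1 \<notin> p" using f(2) fB by (auto simp: P'_def Sn_tensor_ideal_def)
    obtain m2 where m2: "g m2 \<notin> p" using g(2) gB by (auto simp: P'_def Sn_tensor_ideal_def)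
    obtain \<alpha> \<beta> where ab: "valid_monom n (\<lambda>_. 0, \<alpha>)" "valid_monom n (\<beta>, \<lambda>_. 0)"
      "st_mult (st_mult (mon (\<lambda>_. 0, \<alpha>) 1) f) (mon (\<beta>, \<lambda>_. 0) 1) z0 \<notin> p"
      "\<forall>m. fst m = (\<lambda>_. 0) \<and> m \<noteq> z0 \<longrightarrow> st_mult (st_mult (mon (\<lambda>_. 0, \<alpha>) 1) f) (mon (\<beta>, \<lambda>_. 0) 1) m \<in> p"
      using reduce_left[OF ip fB m1] by blast
    obtain \<gamma> \<delta> where gd: "valid_monom n (\<lambda>_. 0, \<gamma>)" "valid_monom n (\<delta>, \<lambda>_. 0)"
      "st_mult (st_mult (mon (\<lambda>_. 0, \<gamma>) 1) g) (mon (\<delta>, \<lambda>_. 0) 1) z0 \<notin> p"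
      "\<forall>m. snd m = (\<lambda>_. 0) \<and> m \<noteq> z0 \<longrightarrow> st_mult (st_mult (mon (\<lambda>_. 0, \<gamma>) 1) g) (mon (\<delta>, \<lambda>_. 0) 1) m \<in> p"
      using reduce_right[OF ip gB m2] by blast
    define f' where "f' = st_mult (st_mult (mon (\<lambda>_. 0, \<alpha>) 1) f) (mon (\<beta>, \<lambda>_. 0) 1)"
    define g' where "g' = st_mult (st_mult (mon (\<lambda>_. 0, \<gamma>) 1) g) (mon (\<delta>, \<lambda>_. 0) 1)"
    have f'I: "f' \<in> I" unfolding f'_def
      using Icl[OF mon_in[OF ab(1)] f(1)] Icl[OF mon_in[OF ab(2)]] by blast
    have g'J: "g' \<in> J" unfolding g'_def
      using Jcl[OF mon_in[OF gd(1)] g(1)] Jcl[OF mon_in[OF gd(2)]] by blast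
    obtain r where r: "f' z0 * r * g' z0 \<notin> p"
      using prime_elem[OF P] ab(3) gd(3) unfolding f'_def g'_def by blast
    define F where "F = st_mult f' (mon z0 r)"
    have FI: "F \<in> I" unfolding F_def using Icl[OF mon_in[OF z0_valid] f'I] by blast
    have FB: "F \<in> Sn_tensor n" and g'B: "g' \<in> Sn_tensor n" using FI g'J IB JB by auto
    have Fv: "F m = f' m * r" for m unfolding F_def by (rule mult_scalar) (use f'I IB in auto)
    have "st_mult F g' \<in> P'" using H FI g'J by blast
    then have inp: "st_mult F g' z0 \<in> p" unfolding P'_def Sn_tensor_ideal_def by blast
    define X where "X = insert z0 {u. F u \<noteq> 0}"
    define Y where "Y = insert z0 {v. g' v \<noteq> 0}"
    have finX: "finite X" and finY: "finite Y" using Sn_fin[OF FB] Sn_fin[OF g'B] by (auto simp: X_def Y_def)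
    have eq: "st_mult F g' z0 = (\<Sum>uv\<in>X \<times> Y. if monom_mult (fst uv) (snd uv) = z0 then F (fst uv) * g' (snd uv) else 0)"
      by (rule st_mult_super) (use finX finY in \<open>auto simp: X_def Y_def\<close>)
    have "(\<Sum>uv\<in>X \<times> Y. if monom_mult (fst uv) (snd uv) = z0 then F (fst uv) * g' (snd uv) else 0) \<in> p
       \<longleftrightarrow> (if monom_mult (fst (z0,z0)) (snd (z0,z0)) = z0 then F (fst (z0,z0)) * g' (snd (z0,z0)) else 0) \<in> p"
    proof (rule idealA_sum_mod[OF ip])
      show "finite (X \<times> Y)" using finX finY by simp
      show "(z0, z0) \<in> X \<times> Y" by (simp add: X_def Y_def)
      show "\<forall>x\<in>X \<times> Y - {(z0, z0)}. (if monom_mult (fst x) (snd x) = z0 then F (fst x) * g' (snd x) else 0) \<in> p"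
      proof
        fix x assume x: "x \<in> X \<times> Y - {(z0, z0)}"
        obtain u v where uv: "x = (u, v)" by (cases x)
        show "(if monom_mult (fst x) (snd x) = z0 then F (fst x) * g' (snd x) else 0) \<in> p"
        proof (cases "monom_mult u v = z0")
          case True
          then have fs: "fst u = (\<lambda>_. 0)" "snd v = (\<lambda>_. 0)" using mm_z0 by blast+
          have "F u * g' v \<in> p"
          proof (cases "u = z0")
            case False
            then have "f' u \<in> p" using ab(4) fs unfolding f'_def by blast
            then show ?thesis using Fv pr by simp
          next
            case True
            then have "v \<noteq> z0" using x uv by auto
            then have "g' v \<in> p" using gd(4) fs unfolding g'_def by blast
            then show ?thesis using pl by simp
          qed
          then show ?thesis using True uv by simp
        qed (use uv p0 in simp)
      qed
    qed
    moreover have "monom_mult z0 z0 = z0" by (rule mm_right0)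
    ultimately have "F z0 * g' z0 \<in> p" using inp eq by simp
    then show False using r Fv by (simp add: mult.assoc)
  qed
  show ?thesis unfolding prime_ideal_in_def using iP ne pr2 by (auto simp: P'_def)
qed

lemma dir2:
  fixes p :: "'a::ring_1 set"
  assumes ip: "idealA p"
    and P: "prime_ideal_in (Sn_tensor n) st_add st_neg st_zero st_mult (Sn_tensor_ideal n p)"
  shows "prime_ideal_in UNIV (+) uminus 0 (*) p"
proof -
  have ne: "p \<noteq> UNIV"
  proof
    assume "p = UNIV"
    then have "Sn_tensor_ideal n p = Sn_tensor n" by (auto simp: Sn_tensor_ideal_def)
    then show False using P by (simp add: prime_ideal_in_def)
  qed
  have pr2: "I \<subseteq> p \<or> J \<subseteq> p" if iI: "idealA I" and iJ: "idealA J" and H: "\<forall>a\<in>I. \<forall>b\<in>J. a * b \<in> p"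
    for I J :: "'a set"
  proof -
    have p0: "0 \<in> p" using ip by (simp add: ideal_in_def)
    have iI': "ideal_in (Sn_tensor n) st_add st_neg st_zero st_mult (Sn_tensor_ideal n I)" by (rule ideal_lift[OF iI])
    have iJ': "ideal_in (Sn_tensor n) st_add st_neg st_zero st_mult (Sn_tensor_ideal n J)" by (rule ideal_lift[OF iJ])
    have "\<forall>f\<in>Sn_tensor_ideal n I. \<forall>g\<in>Sn_tensor_ideal n J. st_mult f g \<in> Sn_tensor_ideal n p"
    proof (intro ballI)
      fix f g assume f: "f \<in> Sn_tensor_ideal n I" and g: "g \<in> Sn_tensor_ideal n J"
      have "st_mult f g m \<in> p" for m unfolding st_mult_def
        by (rule idealA_sum[OF ip]) (use f g H p0 in \<open>auto simp: Sn_tensor_ideal_def\<close>)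
      moreover have "st_mult f g \<in> Sn_tensor n" using f g st_closed by (auto simp: Sn_tensor_ideal_def)
      ultimately show "st_mult f g \<in> Sn_tensor_ideal n p" by (simp add: Sn_tensor_ideal_def)
    qed
    then have "Sn_tensor_ideal n I \<subseteq> Sn_tensor_ideal n p \<or> Sn_tensor_ideal n J \<subseteq> Sn_tensor_ideal n p"
      using P iI' iJ' unfolding prime_ideal_in_def by blast
    moreover have "K \<subseteq> p" if iK: "idealA K" and sub: "Sn_tensor_ideal n K \<subseteq> Sn_tensor_ideal n p" for K :: "'a set"
    proof
      fix a assume a: "a \<in> K"
      have "0 \<in> K" using iK by (simp add: ideal_in_def)
      then have "mon z0 a \<in> Sn_tensor_ideal n K" using a mon_in[OF z0_valid[of n]]
        by (auto simp: Sn_tensor_ideal_def mon_def)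
      then have "mon z0 a \<in> Sn_tensor_ideal n p" using sub by blast
      then have "mon z0 a z0 \<in> p" unfolding Sn_tensor_ideal_def by blast
      then show "a \<in> p" by (simp add: mon_def)
    qed
    ultimately show ?thesis using iI iJ by blast
  qed
  show ?thesis unfolding prime_ideal_in_def using ip ne pr2 by blast
qed


theorem proposition4p3:
  fixes sc :: "'k::field \<Rightarrow> 'a::ring_1 \<Rightarrow> 'a" and n :: nat
  assumes "K_algebra sc" and "n \<ge> 1"
  shows "(prime_ring_in (Sn_tensor n) st_add st_neg st_zero (st_mult :: (monom \<Rightarrow> 'a) \<Rightarrow> _)
            \<longleftrightarrow> prime_ring_in (UNIV :: 'a set) (+) uminus 0 (*))
       \<and> (\<forall>p :: 'a set. ideal_in UNIV (+) uminus 0 (*) p \<longrightarrow>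
            (prime_ideal_in UNIV (+) uminus 0 (*) p \<longleftrightarrow>
             prime_ideal_in (Sn_tensor n) st_add st_neg st_zero st_mult (Sn_tensor_ideal n p)))"
proof -
  have part2: "\<forall>p :: 'a set. ideal_in UNIV (+) uminus 0 (*) p \<longrightarrow>
            (prime_ideal_in UNIV (+) uminus 0 (*) p \<longleftrightarrow>
             prime_ideal_in (Sn_tensor n) st_add st_neg st_zero st_mult (Sn_tensor_ideal n p))"
    using dir1 dir2 by blast
  have i0: "ideal_in UNIV (+) uminus 0 (*) {0::'a}" by (simp add: ideal_in_def)
  have z: "Sn_tensor_ideal n {0::'a} = {st_zero}"
  proof
    show "Sn_tensor_ideal n {0::'a} \<subseteq> {st_zero}"
      by (auto simp: Sn_tensor_ideal_def st_zero_def fun_eq_iff)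
    show "{st_zero} \<subseteq> Sn_tensor_ideal n {0::'a}"
      using zero_in by (auto simp: Sn_tensor_ideal_def st_zero_def)
  qed
  have "prime_ring_in (Sn_tensor n) st_add st_neg st_zero (st_mult :: (monom \<Rightarrow> 'a) \<Rightarrow> _)
            \<longleftrightarrow> prime_ring_in (UNIV :: 'a set) (+) uminus 0 (*)"
    unfolding prime_ring_in_def using part2 i0 z by metis
  then show ?thesis using part2 by blast
qed

end
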